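(* Every connected threshold graph is detour covered, and every $2$-connected threshold graph is cummerbund covered.
   Context: All graphs are finite and simple. A graph $G$ is a threshold graph if there exist a function $f:V(G)\to\mathbb{R}_{\ge 0}$ and a real number $t\ge 0$ such that for any two distinct vertices $u,v$, $u$ and $v$ are adjacent if and only if $f(u)+f(v)>t$. A detour (resp. cummerbund) of a graph is a longest path (resp. longest cycle) in it. A graph is detour covered (resp. cummerbund covered) if every vertex lies in some detour (resp. cummerbund). *)

theory Defs
  imports Complex_Main
begin

definition simple_graph :: "'a set \<Rightarrow> ('a \<Rightarrow> 'a \<Rightarrow> bool) \<Rightarrow> bool" where
  "simple_graph V E \<longleftrightarrow> finite V \<and> (\<forall>u v. E u v \<longrightarrow> E v u)
     \<and> (\<forall>v. \<not> E v v) \<and> (\<forall>u v. E u v \<longrightarrow> u \<in> V \<and> v \<in> V)"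

definition threshold_graph :: "'a set \<Rightarrow> ('a \<Rightarrow> 'a \<Rightarrow> bool) \<Rightarrow> bool" where
  "threshold_graph V E \<longleftrightarrow> (\<exists>(f::'a \<Rightarrow> real) (t::real). t \<ge> 0 \<and> (\<forall>v\<in>V. f v \<ge> 0) \<and>
     (\<forall>u\<in>V. \<forall>v\<in>V. u \<noteq> v \<longrightarrow> (E u v \<longleftrightarrow> f u + f v > t)))"

definition is_path :: "'a set \<Rightarrow> ('a \<Rightarrow> 'a \<Rightarrow> bool) \<Rightarrow> 'a list \<Rightarrow> bool" where
  "is_path V E xs \<longleftrightarrow> xs \<noteq> [] \<and> distinct xs \<and> set xs \<subseteq> V \<and>
     (\<forall>i. Suc i < length xs \<longrightarrow> E (xs ! i) (xs ! Suc i))"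

definition is_cycle :: "'a set \<Rightarrow> ('a \<Rightarrow> 'a \<Rightarrow> bool) \<Rightarrow> 'a list \<Rightarrow> bool" where
  "is_cycle V E xs \<longleftrightarrow> length xs \<ge> 3 \<and> is_path V E xs \<and> E (last xs) (hd xs)"

definition detour :: "'a set \<Rightarrow> ('a \<Rightarrow> 'a \<Rightarrow> bool) \<Rightarrow> 'a list \<Rightarrow> bool" where
  "detour V E xs \<longleftrightarrow> is_path V E xs \<and> (\<forall>ys. is_path V E ys \<longrightarrow> length ys \<le> length xs)"

definition cummerbund :: "'a set \<Rightarrow> ('a \<Rightarrow> 'a \<Rightarrow> bool) \<Rightarrow> 'a list \<Rightarrow> bool" where
  "cummerbund V E xs \<longleftrightarrow> is_cycle V E xs \<and> (\<forall>ys. is_cycle V E ys \<longrightarrow> length ys \<le> length xs)"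

definition detour_covered :: "'a set \<Rightarrow> ('a \<Rightarrow> 'a \<Rightarrow> bool) \<Rightarrow> bool" where
  "detour_covered V E \<longleftrightarrow> (\<forall>v\<in>V. \<exists>xs. detour V E xs \<and> v \<in> set xs)"

definition cummerbund_covered :: "'a set \<Rightarrow> ('a \<Rightarrow> 'a \<Rightarrow> bool) \<Rightarrow> bool" where
  "cummerbund_covered V E \<longleftrightarrow> (\<forall>v\<in>V. \<exists>xs. cummerbund V E xs \<and> v \<in> set xs)"

definition graph_connected :: "'a set \<Rightarrow> ('a \<Rightarrow> 'a \<Rightarrow> bool) \<Rightarrow> bool" where
  "graph_connected V E \<longleftrightarrow> V \<noteq> {} \<and>
     (\<forall>u\<in>V. \<forall>v\<in>V. \<exists>xs. is_path V E xs \<and> hd xs = u \<and> last xs = v)"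

definition two_connected :: "'a set \<Rightarrow> ('a \<Rightarrow> 'a \<Rightarrow> bool) \<Rightarrow> bool" where
  "two_connected V E \<longleftrightarrow> card V \<ge> 3 \<and> graph_connected V E \<and>
     (\<forall>x\<in>V. graph_connected (V - {x}) E)"

end

theory Submission
  imports Defs
begin

lemma path_iff:
  "is_path V E xs \<longleftrightarrow> xs \<noteq> [] \<and> distinct xs \<and> set xs \<subseteq> V \<and> successively E xs"
  by (auto simp: is_path_def successively_conv_nth)

lemma path_len:
  assumes "simple_graph V E" "is_path V E xs"
  shows "length xs \<le> card V"
proof -
  have "finite V" using assms(1) by (simp add: simple_graph_def)
  moreover have "distinct xs" "set xs \<subseteq> V" using assms(2) by (auto simp: path_iff)
  ultimately show ?thesis by (metis card_mono distinct_card)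
qed

lemma ex_detour:
  assumes "simple_graph V E" "is_path V E xs0"
  shows "\<exists>P. detour V E P"
proof -
  have "\<exists>x. is_path V E x \<and> (\<forall>y. is_path V E y \<longrightarrow> length y \<le> length x)"
    by (rule ex_has_greatest_nat[of "is_path V E" xs0 length "Suc (card V)"])
       (use assms path_len in \<open>auto simp: less_Suc_eq_le\<close>)
  then show ?thesis by (auto simp: detour_def)
qed

lemma ex_cummerbund:
  assumes "simple_graph V E" "is_cycle V E xs0"
  shows "\<exists>P. cummerbund V E P"
proof -
  have "\<exists>x. is_cycle V E x \<and> (\<forall>y. is_cycle V E y \<longrightarrow> length y \<le> length x)"
    by (rule ex_has_greatest_nat[of "is_cycle V E" xs0 length "Suc (card V)"])
       (use assms path_len in \<open>auto simp: less_Suc_eq_le is_cycle_def\<close>)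
  then show ?thesis by (auto simp: cummerbund_def)
qed

lemma cycle_rotate:
  assumes "is_cycle V E (A @ B)"
  shows "is_cycle V E (B @ A)"
proof (cases "A = [] \<or> B = []")
  case True then show ?thesis using assms by auto
next
  case False
  then show ?thesis using assms
    by (auto simp: is_cycle_def path_iff successively_append_iff)
qed

locale thr =
  fixes V :: "'a set" and E :: "'a \<Rightarrow> 'a \<Rightarrow> bool" and f :: "'a \<Rightarrow> real" and t :: real
  assumes sg: "simple_graph V E"
  and fE: "\<And>u v. u \<in> V \<Longrightarrow> v \<in> V \<Longrightarrow> u \<noteq> v \<Longrightarrow> E u v \<longleftrightarrow> f u + f v > t"
begin

lemma fin: "finite V" and sym: "E u v \<Longrightarrow> E v u" and irr: "\<not> E v v"
  and inV1: "E u v \<Longrightarrow> u \<in> V" and inV2: "E u v \<Longrightarrow> v \<in> V"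
  using sg by (auto simp: simple_graph_def)

lemma nest:
  assumes "a \<in> V" "f b \<le> f a" "E b c" "c \<noteq> a"
  shows "E a c"
proof -
  have "b \<in> V" "c \<in> V" "b \<noteq> c" using assms inV1 inV2 irr by auto
  then have "f b + f c > t" using fE assms by blast
  then show ?thesis using fE assms \<open>c \<in> V\<close> by force
qed

lemma dom:
  assumes "z \<in> V" "\<forall>v\<in>V. f z \<le> f v" "E z y" "w \<in> V" "w \<noteq> y"
  shows "E w y"
  using nest[of w z y] assms by auto

lemma swap_path:
  assumes "z \<in> V" "v \<in> V" "f z \<le> f v" "is_path V E (L @ z # R)" "v \<notin> set (L @ z # R)"
  shows "is_path V E (L @ v # R)"
proof -
  have l1: "E x v" if "E x z" "x \<noteq> v" for x using nest[of v z x] sym that assms by blast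
  have l2: "E v x" if "E z x" "x \<noteq> v" for x using nest[of v z x] that assms by blast
  have "L \<noteq> [] \<Longrightarrow> last L \<noteq> v" "R \<noteq> [] \<Longrightarrow> hd R \<noteq> v" using assms(5) by auto
  then show ?thesis using assms l1 l2
    by (auto simp: path_iff successively_append_iff successively_Cons)
qed

lemma swap_cycle:
  assumes "z \<in> V" "v \<in> V" "f z \<le> f v" "is_cycle V E (L @ z # R)" "v \<notin> set (L @ z # R)"
  shows "is_cycle V E (L @ v # R)"
proof -
  have l1: "E x v" if "E x z" "x \<noteq> v" for x using nest[of v z x] sym that assms by blast
  have l2: "E v x" if "E z x" "x \<noteq> v" for x using nest[of v z x] that assms by blast
  have p: "is_path V E (L @ v # R)" using swap_path assms by (auto simp: is_cycle_def)
  have c: "E (last (L @ z # R)) (hd (L @ z # R))" "length (L @ z # R) \<ge> 3"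
    using assms(4) by (auto simp: is_cycle_def)
  have "E (last (L @ v # R)) (hd (L @ v # R))"
  proof (cases L)
    case Nil
    then have "R \<noteq> []" using c by auto
    then have "last R \<noteq> v" using assms(5) by auto
    then show ?thesis using c Nil l1 \<open>R \<noteq> []\<close> by auto
  next
    case (Cons a L')
    show ?thesis
    proof (cases R)
      case Nil then show ?thesis using c Cons l2 assms(5) by auto
    next
      case (Cons b R') then show ?thesis using c \<open>L = a # L'\<close> by auto
    qed
  qed
  then show ?thesis using p c by (auto simp: is_cycle_def)
qed

lemma detour_z:
  assumes zV: "z \<in> V" and zmin: "\<forall>v\<in>V. f z \<le> f v" and zy: "E z y" and dP: "detour V E P"
  shows "\<exists>Q. detour V E Q \<and> z \<in> set Q"
proof (cases "z \<in> set P")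
  case True then show ?thesis using dP by blast
next
  case zP: False
  have yV: "y \<in> V" using zy inV2 by auto
  have domy: "E w y" "E y w" if "w \<in> V" "w \<noteq> y" for w
    using dom[OF zV zmin zy that] sym by auto
  have yz: "E y z" using zy sym by auto
  have yz': "y \<noteq> z" using zy irr by auto
  have P: "P \<noteq> []" "distinct P" "set P \<subseteq> V" "successively E P"
    and mx: "\<And>ys. is_path V E ys \<Longrightarrow> length ys \<le> length P"
    using dP by (auto simp: detour_def path_iff)
  have good: "\<exists>Q. detour V E Q \<and> z \<in> set Q" if "is_path V E Q" "length Q = length P" "z \<in> set Q" for Q
    using that mx by (auto simp: detour_def)
  show ?thesis
  proof (cases "y \<in> set P")
    case False
    have "last P \<in> V" "last P \<noteq> y" using P False by auto
    then have "E (last P) y" using domy by auto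
    then have "is_path V E (P @ [y, z])" using P False zP yz yz' yV zV
      by (auto simp: path_iff successively_append_iff)
    from mx[OF this] show ?thesis by simp
  next
    case True
    then obtain L R where LR: "P = L @ y # R" by (meson split_list)
    show ?thesis
    proof (cases "L = []")
      case True
      then have "is_path V E (z # P)" using P zP zy zV LR by (auto simp: path_iff)
      from mx[OF this] show ?thesis by simp
    next
      case Lne: False
      show ?thesis
      proof (cases "R = []")
        case True
        then have "is_path V E (P @ [z])" using P zP yz zV LR by (auto simp: path_iff successively_append_iff)
        from mx[OF this] show ?thesis by simp
      next
        case Rne: False
        obtain L1 a where L1: "L = L1 @ [a]" using Lne by (metis rev_exhaust)
        obtain b R1 where R1: "R = b # R1" using Rne by (metis list.exhaust)
        show ?thesis
        proof (cases "L1 = []")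
          case True
          have "is_path V E (z # y # R)" using P zP zy zV LR L1 True
            by (auto simp: path_iff successively_append_iff)
          then show ?thesis using good LR L1 True by auto
        next
          case L1ne: False
          show ?thesis
          proof (cases "R1 = []")
            case True
            have "is_path V E (L @ [y, z])" using P zP yz zV LR R1 True
              by (auto simp: path_iff successively_append_iff)
            then show ?thesis using good LR R1 True by auto
          next
            case R1ne: False
            obtain L2 a' where L2: "L1 = L2 @ [a']" using L1ne by (metis rev_exhaust)
            obtain c R2 where R2: "R1 = c # R2" using R1ne by (metis list.exhaust)
            have PP: "P = L2 @ a' # a # y # b # c # R2" using LR L1 L2 R1 R2 by simp
            have e: "E a' a" "E b c" using P(4) unfolding PP by (auto simp: successively_append_iff)
            have inV: "a \<in> V" "b \<in> V" "a' \<in> V" "c \<in> V" using P(3) unfolding PP by auto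
            have dd: "distinct (L2 @ a' # a # y # b # c # R2)" using P(2) PP by simp
            show ?thesis
            proof (cases "f b \<le> f a")
              case True
              have ac: "E a c" using nest[OF inV(1) True e(2)] dd by auto
              define Q where "Q = L2 @ a' # a # c # R2 @ [y, z]"
              have "last (c # R2) \<in> V" "last (c # R2) \<noteq> y"
                using P(3) dd unfolding PP by (auto simp: last_in_set dest: subsetD[OF _ last_in_set])
              then have ly: "E (last (c # R2)) y" using domy by blast
              have sc: "successively E (c # R2 @ [y, z])"
                using successively_append_iff[of E "c # R2" "[y,z]"] P(4) ly yz
                unfolding PP by (simp add: successively_append_iff)
              have "is_path V E Q" unfolding Q_def path_iff
                using P zP yz zV yV PP ac ly dd sc
                by (auto simp: successively_append_iff)
              moreover have "length Q = length P" unfolding Q_def PP by simp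
              ultimately show ?thesis using good unfolding Q_def by auto
            next
              case False
              have ba': "E b a'" using nest[OF inV(2) _ sym[OF e(1)]] False dd by auto
              define Q where "Q = z # y # L2 @ a' # b # c # R2"
              have "hd (L2 @ [a']) \<in> V" "hd (L2 @ [a']) \<noteq> y"
                using P(3) dd unfolding PP by (auto simp: hd_append dest: subsetD[OF _ hd_in_set])
              then have hy: "E y (hd (L2 @ [a']))" using domy by blast
              have sc: "successively E (y # L2 @ a' # b # c # R2)"
                using successively_append_iff[of E "y # L2" "a' # b # c # R2"] P(4) hy sym[OF ba'] e
                unfolding PP by (cases "L2 = []") (auto simp add: successively_append_iff successively_Cons)
              have "is_path V E Q" unfolding Q_def path_iff
                using P zP zy zV yV PP ba' hy dd sc
                by (auto simp: successively_append_iff sym hd_append split: if_splits)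
              moreover have "length Q = length P" unfolding Q_def PP by simp
              ultimately show ?thesis using good unfolding Q_def by auto
            qed
          qed
        qed
      qed
    qed
  qed
qed

lemma join:
  assumes "distinct (M @ N)" "set M \<subseteq> V" "set N \<subseteq> V" "successively E M" "successively E N"
  shows "\<exists>W. distinct W \<and> set W \<subseteq> set M \<union> set N \<and> successively E W \<and>
             length M + length N \<le> length W + 1"
proof (cases "M = [] \<or> N = []")
  case True
  then show ?thesis
  proof
    assume "M = []" then show ?thesis using assms by (intro exI[of _ N]) auto
  next
    assume "N = []" then show ?thesis using assms by (intro exI[of _ M]) auto
  qed
next
  case False
  then obtain a M' where M: "M = a # M'" by (metis list.exhaust)
  obtain N' b where N: "N = N' @ [b]" using False by (metis rev_exhaust)
  have aV: "a \<in> V" "b \<in> V" using assms M N by auto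
  show ?thesis
  proof (cases "f b \<le> f a")
    case True
    have br: "N' \<noteq> [] \<Longrightarrow> E a (last N')"
    proof -
      assume ne: "N' \<noteq> []"
      have "E (last N') b" using assms(5) ne unfolding N by (simp add: successively_append_iff)
      moreover have "last N' \<noteq> a" using assms(1) ne unfolding M N by auto
      ultimately show ?thesis using nest[OF aV(1) True] sym by blast
    qed
    have "successively E (N' @ a # M')"
      using assms(4,5) br sym unfolding M N by (auto simp: successively_append_iff)
    then show ?thesis using assms unfolding M N by (intro exI[of _ "N' @ a # M'"]) auto
  next
    case False
    have br: "M' \<noteq> [] \<Longrightarrow> E b (hd M')"
    proof -
      assume ne: "M' \<noteq> []"
      have "E a (hd M')" using assms(4) ne unfolding M by (simp add: successively_Cons)
      moreover have "hd M' \<noteq> b" using assms(1) ne unfolding M N by auto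
      moreover have "f a \<le> f b" using False by simp
      ultimately show ?thesis using nest[OF aV(2)] by blast
    qed
    have "successively E (N' @ b # M')"
      using assms(4,5) br unfolding M N by (auto simp: successively_append_iff successively_Cons)
    then show ?thesis using assms unfolding M N by (intro exI[of _ "N' @ b # M'"]) auto
  qed
qed

lemma cycle_at:
  assumes "is_cycle V E C" "x \<in> set C"
  shows "\<exists>W. is_cycle V E (x # W) \<and> set W = set C - {x} \<and> length W + 1 = length C"
proof -
  obtain L R where C: "C = L @ x # R" using assms(2) by (meson split_list)
  have "is_cycle V E ((x # R) @ L)" using cycle_rotate[of V E L "x # R"] assms(1) C by simp
  moreover have "set (R @ L) = set C - {x}" using assms(1) C by (auto simp: is_cycle_def path_iff)
  ultimately show ?thesis using C by (intro exI[of _ "R @ L"]) auto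
qed

lemma build:
  assumes zV: "z \<in> V" and zmin: "\<forall>v\<in>V. f z \<le> f v" and zy: "E z y" and zy': "E z y'"
    and yy: "y \<noteq> y'" and W: "distinct W" "set W \<subseteq> V" "y \<notin> set W" "y' \<notin> set W" "z \<notin> set W"
    "successively E W"
  shows "is_cycle V E (y' # W @ [y, z])"
proof -
  have yV: "y \<in> V" "y' \<in> V" using zy zy' inV2 by auto
  have d1: "E w y" if "w \<in> V" "w \<noteq> y" for w using dom[OF zV zmin zy that] .
  have d2: "E y' w" if "w \<in> V" "w \<noteq> y'" for w using dom[OF zV zmin zy' that] sym by blast
  have zz: "z \<noteq> y" "z \<noteq> y'" using zy zy' irr by auto
  have "successively E (y' # W @ [y, z])"
  proof (cases "W = []")
    case True then show ?thesis using d2[of y] yV yy zy sym by auto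
  next
    case False
    have "hd W \<in> set W" "last W \<in> set W" using False by auto
    then have "E y' (hd W)" "E (last W) y" using W d1 d2 by blast+
    then show ?thesis using False W zy sym
      by (auto simp: successively_append_iff successively_Cons)
  qed
  then show ?thesis using W yV zV zz yy zy' sym
    by (auto simp: is_cycle_def path_iff)
qed

lemma cummerbund_z:
  assumes zV: "z \<in> V" and zmin: "\<forall>v\<in>V. f z \<le> f v" and zy: "E z y" and zy': "E z y'"
    and yy: "y \<noteq> y'" and cC: "cummerbund V E C"
  shows "\<exists>Q. cummerbund V E Q \<and> z \<in> set Q"
proof (cases "z \<in> set C")
  case True then show ?thesis using cC by blast
next
  case zC: False
  have C: "is_cycle V E C" and mx: "\<And>ys. is_cycle V E ys \<Longrightarrow> length ys \<le> length C"
    using cC by (auto simp: cummerbund_def)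
  have CC: "distinct C" "set C \<subseteq> V" "successively E C"
    using C by (auto simp: is_cycle_def path_iff)
  have "\<exists>W. distinct W \<and> set W \<subseteq> V \<and> y \<notin> set W \<and> y' \<notin> set W \<and> z \<notin> set W \<and>
            successively E W \<and> length C \<le> length W + 3"
  proof (cases "y \<in> set C \<and> y' \<in> set C")
    case True
    obtain W0 where W0: "is_cycle V E (y # W0)" "set W0 = set C - {y}" "length W0 + 1 = length C"
      using cycle_at[OF C] True by blast
    have W0p: "distinct (y # W0)" "set W0 \<subseteq> V" "successively E W0"
      using W0(1) by (auto simp: is_cycle_def path_iff successively_Cons)
    have "y' \<in> set W0" using W0(2) True yy by auto
    then obtain M N where MN: "W0 = M @ y' # N" by (meson split_list)
    have "distinct (M @ N)" "set M \<subseteq> V" "set N \<subseteq> V" "successively E M" "successively E N"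
      using W0p unfolding MN by (auto simp: successively_append_iff successively_Cons)
    from join[OF this] obtain W where W: "distinct W" "set W \<subseteq> set M \<union> set N" "successively E W"
      "length M + length N \<le> length W + 1" by blast
    show ?thesis
      using W W0 W0p zC CC unfolding MN by (intro exI[of _ W]) auto
  next
    case nb: False
    show ?thesis
    proof (cases "y \<in> set C \<or> y' \<in> set C")
      case True
      then obtain x where x: "x \<in> set C" "x \<in> {y, y'}" by auto
      obtain W where W: "is_cycle V E (x # W)" "set W = set C - {x}" "length W + 1 = length C"
        using cycle_at[OF C x(1)] by blast
      have "distinct (x # W)" "successively E W"
        using W(1) by (auto simp: is_cycle_def path_iff successively_Cons)
      then show ?thesis using W nb x zC CC by (intro exI[of _ W]) auto
    next
      case False
      then show ?thesis using CC zC by (intro exI[of _ C]) auto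
    qed
  qed
  then obtain W where W: "distinct W" "set W \<subseteq> V" "y \<notin> set W" "y' \<notin> set W" "z \<notin> set W"
    "successively E W" "length C \<le> length W + 3" by blast
  have cyc: "is_cycle V E (y' # W @ [y, z])" using build[OF zV zmin zy zy' yy W(1-6)] .
  have "cummerbund V E (y' # W @ [y, z])"
    using cyc mx W(7) unfolding cummerbund_def by (metis le_trans length_append_singleton
      length_Cons append_Cons append_Nil length_append list.size(3) add.commute add_Suc_right
      numeral_3_eq_3 plus_1_eq_Suc)
  then show ?thesis by (intro exI[of _ "y' # W @ [y, z]"]) auto
qed

end

lemma conn_nb:
  assumes "graph_connected V E" "u \<in> V" "w \<in> V" "u \<noteq> w"
  shows "\<exists>x\<in>V. E u x"
proof -
  obtain xs where xs: "is_path V E xs" "hd xs = u" "last xs = w"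
    using assms unfolding graph_connected_def by blast
  then obtain r where r: "xs = u # r" by (cases xs) (auto simp: path_iff)
  then have "r \<noteq> []" using xs assms(4) by auto
  then obtain x r' where "r = x # r'" by (cases r) auto
  then show ?thesis using xs r by (auto simp: path_iff)
qed

theorem corollary13:
  fixes V :: "'a set" and E :: "'a \<Rightarrow> 'a \<Rightarrow> bool"
  assumes "simple_graph V E" and "threshold_graph V E"
  shows "(graph_connected V E \<longrightarrow> detour_covered V E) \<and>
         (two_connected V E \<longrightarrow> cummerbund_covered V E)"
proof -
  obtain f :: "'a \<Rightarrow> real" and t :: real where ft: "\<forall>u\<in>V. \<forall>v\<in>V. u \<noteq> v \<longrightarrow> (E u v \<longleftrightarrow> f u + f v > t)"
    using assms(2) unfolding threshold_graph_def by metis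
  interpret thr V E f t using assms(1) ft by unfold_locales auto
  have zex: "\<exists>z\<in>V. \<forall>v\<in>V. f z \<le> f v" if ne: "V \<noteq> {}"
  proof -
    have "Min (f ` V) \<in> f ` V" using Min_in fin ne by auto
    then obtain z where "z \<in> V" "f z = Min (f ` V)" by auto
    then show ?thesis using fin by (intro bexI[of _ z]) auto
  qed
  show ?thesis
  proof (intro conjI impI)
    assume gc: "graph_connected V E"
    then have "V \<noteq> {}" by (simp add: graph_connected_def)
    then obtain z where zV: "z \<in> V" and zmin: "\<forall>v\<in>V. f z \<le> f v" using zex by blast
    have pz: "is_path V E [z]" using zV by (simp add: path_iff)
    show "detour_covered V E"
    proof (cases "\<exists>y. E z y")
      case True
      then obtain y where zy: "E z y" by blast
      obtain P where "detour V E P" using ex_detour[OF assms(1) pz] by blast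
      then obtain Q where Q: "detour V E Q" "z \<in> set Q" using detour_z[OF zV zmin zy] by blast
      show ?thesis unfolding detour_covered_def
      proof
        fix v assume vV: "v \<in> V"
        show "\<exists>xs. detour V E xs \<and> v \<in> set xs"
        proof (cases "v \<in> set Q")
          case True then show ?thesis using Q by blast
        next
          case False
          obtain L R where LR: "Q = L @ z # R" using Q(2) by (meson split_list)
          have "is_path V E (L @ v # R)"
            using swap_path[OF zV vV _ _ ] zmin vV Q(1) False LR by (auto simp: detour_def)
          then have "detour V E (L @ v # R)" using Q(1) LR by (auto simp: detour_def)
          then show ?thesis by (intro exI[of _ "L @ v # R"]) auto
        qed
      qed
    next
      case False
      have VV: "V = {z}" using conn_nb[OF gc zV] False zV by blast
      have "detour V E [z]" using pz path_len[OF assms(1)] VV by (auto simp: detour_def)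
      then show ?thesis using VV by (auto simp: detour_covered_def)
    qed
  next
    assume tc: "two_connected V E"
    then have c3: "card V \<ge> 3" and gc: "graph_connected V E"
      and gx: "\<And>x. x \<in> V \<Longrightarrow> graph_connected (V - {x}) E" by (auto simp: two_connected_def)
    then have "V \<noteq> {}" by (simp add: graph_connected_def)
    then obtain z where zV: "z \<in> V" and zmin: "\<forall>v\<in>V. f z \<le> f v" using zex by blast
    have "card (V - {z}) \<ge> 2" using c3 zV fin by simp
    then obtain w where "w \<in> V" "w \<noteq> z" by (metis Diff_iff card_0_eq fin finite_Diff insertI1
       not_numeral_le_zero ex_in_conv)
    then obtain y where yV: "y \<in> V" and zy: "E z y" using conn_nb[OF gc zV] by metis
    have "card {y, z} \<le> 2" by (simp add: card_insert_le_m1)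
    then have "card (V - {y, z}) \<ge> 1" using c3 zV yV fin by (simp add: card_Diff_subset)
    then obtain w' where w': "w' \<in> V - {y, z}"
      by (metis card_0_eq fin finite_Diff ex_in_conv not_one_le_zero)
    have zy': "z \<noteq> y" using zy irr by auto
    obtain y' where y': "y' \<in> V - {y}" "E z y'"
      using conn_nb[OF gx[OF yV], of z w'] w' zV zy' by auto
    have yy: "y \<noteq> y'" using y' by auto
    have "E y y'" using dom[OF zV zmin zy, of y'] y' sym by auto
    then have cz: "is_cycle V E [z, y, y']" using zy y' yy zy' zV yV sym irr
      by (auto simp: is_cycle_def path_iff)
    obtain C where "cummerbund V E C" using ex_cummerbund[OF assms(1) cz] by blast
    then obtain Q where Q: "cummerbund V E Q" "z \<in> set Q"
      using cummerbund_z[OF zV zmin zy y'(2) yy] by blast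
    show "cummerbund_covered V E" unfolding cummerbund_covered_def
    proof
      fix v assume vV: "v \<in> V"
      show "\<exists>xs. cummerbund V E xs \<and> v \<in> set xs"
      proof (cases "v \<in> set Q")
        case True then show ?thesis using Q by blast
      next
        case False
        obtain L R where LR: "Q = L @ z # R" using Q(2) by (meson split_list)
        have "is_cycle V E (L @ v # R)"
          using swap_cycle[OF zV vV] zmin vV Q(1) False LR by (auto simp: cummerbund_def)
        then have "cummerbund V E (L @ v # R)" using Q(1) LR by (auto simp: cummerbund_def)
        then show ?thesis by (intro exI[of _ "L @ v # R"]) auto
      qed
    qed
  qed
qed

end
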